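(* Consider a gossip network consisting of a source node $s$ and end-nodes $\mathcal{N}=\{1,\dots,n\}$, with the dynamics described in the context. For a nonempty subset $S\subseteq\mathcal{N}$, let $F_S(t)=\max_{j\in S}F_j(t)$ and $F_S=\lim_{t\to\infty}\mathbb{E}[F_S(t)]$. Then for every nonempty $S\subseteq \mathcal{N}$, $$F_S=\frac{\lambda_s(S)+\sum_{i\in N(S)}\lambda_i(S)\,F_{S\cup\{i\}}}{\lambda_e+\lambda_s(S)+\sum_{i\in N(S)}\lambda_i(S)}.$$
   Context: Model: The information at the source is updated (a new version is generated) according to a Poisson process of rate $\lambda_e>0$. The source sends its current version to end-node $j\in\mathcal{N}$ according to a Poisson process of rate $\lambda_{sj}\ge 0$, and end-node $i$ sends its currently stored version to end-node $j\neq i$ according to a Poisson process of rate $\lambda_{ij}\ge 0$; all these processes are independent. When a node receives a version, it keeps the fresher of its stored version and the received one. The binary freshness of end-node $k$ at time $t$ is $F_k(t)=1$ if node $k$ stores the current version of the source, and $F_k(t)=0$ otherwise. Thus: when the source generates a new version, all $F_k$ become $0$; when the source updates node $j$, $F_j$ becomes $1$; when node $i$ updates node $j$, $F_j$ becomes $\max(F_i,F_j)$. Notation: for $S\subseteq\mathcal{N}$, $\lambda_s(S)=\sum_{j\in S}\lambda_{sj}$ is the total update rate from the source into $S$; for $i\notin S$, $\lambda_i(S)=\sum_{j\in S}\lambda_{ij}$ is the total update rate from node $i$ into $S$; $N(S)=\{i\in\mathcal{N}\setminus S:\lambda_i(S)>0\}$ is the set of updating neighbors of $S$. *)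

theory Defs
  imports "HOL-Analysis.Analysis"
begin

text \<open>End-nodes are 1..n. A state of the network is the set A of end-nodes
  that currently store the current version (F_k = 1 iff k in A).
  le = lambda_e, ls j = lambda_{sj}, l i j = lambda_{ij}.\<close>

definition nodes :: "nat \<Rightarrow> nat set" where
  "nodes n = {1..n}"

text \<open>Sum of the rates of all elementary events (Poisson clocks) that move state A
  to state B (self-loops included, they cancel in the forward equation).\<close>
definition event_rate ::
  "nat \<Rightarrow> real \<Rightarrow> (nat \<Rightarrow> real) \<Rightarrow> (nat \<Rightarrow> nat \<Rightarrow> real) \<Rightarrow> nat set \<Rightarrow> nat set \<Rightarrow> real" where
  "event_rate n le ls l A B =
     (if B = {} then le else 0)
   + (\<Sum>j\<in>nodes n. if B = insert j A then ls j else 0)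
   + (\<Sum>i\<in>nodes n. \<Sum>j\<in>nodes n - {i}.
        if B = (if i \<in> A then insert j A else A) then l i j else 0)"

definition total_rate ::
  "nat \<Rightarrow> real \<Rightarrow> (nat \<Rightarrow> real) \<Rightarrow> (nat \<Rightarrow> nat \<Rightarrow> real) \<Rightarrow> real" where
  "total_rate n le ls l =
     le + (\<Sum>j\<in>nodes n. ls j) + (\<Sum>i\<in>nodes n. \<Sum>j\<in>nodes n - {i}. l i j)"

text \<open>p t A = probability that the state at time t is A; it satisfies the
  Kolmogorov forward equation of the continuous-time Markov chain.\<close>
definition forward_eq ::
  "nat \<Rightarrow> real \<Rightarrow> (nat \<Rightarrow> real) \<Rightarrow> (nat \<Rightarrow> nat \<Rightarrow> real) \<Rightarrow> (real \<Rightarrow> nat set \<Rightarrow> real) \<Rightarrow> bool" where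
  "forward_eq n le ls l p \<longleftrightarrow>
     (\<forall>B\<in>Pow (nodes n). \<forall>t\<ge>0.
        ((\<lambda>u. p u B) has_real_derivative
           ((\<Sum>A\<in>Pow (nodes n). p t A * event_rate n le ls l A B)
            - p t B * total_rate n le ls l)) (at t within {0..}))"

definition initial_distribution :: "nat \<Rightarrow> (nat set \<Rightarrow> real) \<Rightarrow> bool" where
  "initial_distribution n p0 \<longleftrightarrow>
     (\<forall>A\<in>Pow (nodes n). p0 A \<ge> 0) \<and> (\<Sum>A\<in>Pow (nodes n). p0 A) = 1"

text \<open>E[F_S(t)] = P(some node of S is fresh at time t).\<close>
definition exp_fresh :: "nat \<Rightarrow> (real \<Rightarrow> nat set \<Rightarrow> real) \<Rightarrow> nat set \<Rightarrow> real \<Rightarrow> real" where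
  "exp_fresh n p S t = (\<Sum>A\<in>{A\<in>Pow (nodes n). A \<inter> S \<noteq> {}}. p t A)"

definition lam_s :: "(nat \<Rightarrow> real) \<Rightarrow> nat set \<Rightarrow> real" where
  "lam_s ls S = (\<Sum>j\<in>S. ls j)"

definition lam_i :: "(nat \<Rightarrow> nat \<Rightarrow> real) \<Rightarrow> nat \<Rightarrow> nat set \<Rightarrow> real" where
  "lam_i l i S = (\<Sum>j\<in>S. l i j)"

definition upd_neighbors :: "nat \<Rightarrow> (nat \<Rightarrow> nat \<Rightarrow> real) \<Rightarrow> nat set \<Rightarrow> nat set" where
  "upd_neighbors n l S = {i \<in> nodes n - S. lam_i l i S > 0}"

end

theory Submission imports Defs begin


lemma ode_upper:
  fixes y h :: "real \<Rightarrow> real" and a H e :: real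
  assumes a: "a > 0" and e: "e > 0"
    and d: "\<And>t. t > 0 \<Longrightarrow> (y has_real_derivative (h t - a * y t)) (at t)"
    and lim: "(h \<longlongrightarrow> H) at_top"
  shows "eventually (\<lambda>t. y t < H / a + e) at_top"
proof -
  have "eventually (\<lambda>t. dist (h t) H < a * e / 2) at_top"
    using lim a e unfolding tendsto_iff by (meson half_gt_zero mult_pos_pos)
  then obtain T0 where T0: "\<And>t. t \<ge> T0 \<Longrightarrow> \<bar>h t - H\<bar> < a * e / 2"
    by (auto simp: eventually_at_top_linorder dist_real_def)
  define T where "T = max T0 1"
  define \<phi> where "\<phi> t = exp (a * t) * (y t - H / a - e / 2)" for t
  have mono: "\<phi> t \<le> \<phi> T" if "t \<ge> T" for t
  proof (rule DERIV_nonpos_imp_nonincreasing[OF that])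
    fix x assume x: "T \<le> x" "x \<le> t"
    have "x > 0" using x unfolding T_def by auto
    have D: "(\<phi> has_real_derivative
        (a * exp (a * x) * (y x - H / a - e / 2) + exp (a * x) * (h x - a * y x))) (at x)"
      unfolding \<phi>_def
      by (auto intro!: derivative_eq_intros d[OF \<open>x > 0\<close>])
    have "a * exp (a * x) * (y x - H / a - e / 2) + exp (a * x) * (h x - a * y x)
        = exp (a * x) * (h x - H - a * e / 2)"
      using a by (simp add: field_simps)
    also have "\<dots> \<le> 0"
    proof -
      have "T0 \<le> x" using x unfolding T_def by auto
      hence "\<bar>h x - H\<bar> < a * e / 2" by (rule T0)
      hence "h x - H - a * e / 2 \<le> 0" by linarith
      thus ?thesis by (simp add: mult_nonneg_nonpos)
    qed
    finally show "\<exists>z. DERIV \<phi> x :> z \<and> z \<le> 0" using D by blast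
  qed
  define C where "C = \<phi> T"
  have lim0: "((\<lambda>t. C * exp (- a * t)) \<longlongrightarrow> 0) at_top"
  proof -
    have "LIM t at_top. a * t :> at_top"
      by (rule filterlim_tendsto_pos_mult_at_top[OF tendsto_const a filterlim_ident])
    hence "LIM t at_top. - (a * t) :> at_bot" by (simp add: filterlim_uminus_at_top)
    hence "((\<lambda>t. exp (- (a * t))) \<longlongrightarrow> 0) at_top"
      by (rule filterlim_compose[OF exp_at_bot])
    thus ?thesis using tendsto_mult_right_zero[of _ at_top C] by simp
  qed
  hence "eventually (\<lambda>t. \<bar>C * exp (- a * t)\<bar> < e / 2) at_top"
  proof -
    have "eventually (\<lambda>t. dist (C * exp (- a * t)) 0 < e / 2) at_top"
      using tendstoD[OF lim0, of "e/2"] e by linarith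
    thus ?thesis by (simp add: dist_real_def)
  qed
  moreover have "eventually (\<lambda>t. t \<ge> T) at_top" by simp
  ultimately show ?thesis
  proof eventually_elim
    case (elim t)
    have "exp (a * t) * (y t - H / a - e / 2) \<le> C" using mono[OF elim(2)] by (simp add: \<phi>_def C_def)
    hence "y t - H / a - e / 2 \<le> C * exp (- a * t)"
      by (simp add: exp_minus field_simps mult.commute)
    thus ?case using elim(1) by linarith
  qed
qed

lemma ode_limit:
  fixes y h :: "real \<Rightarrow> real" and a H :: real
  assumes a: "a > 0"
    and d: "\<And>t. t > 0 \<Longrightarrow> (y has_real_derivative (h t - a * y t)) (at t)"
    and lim: "(h \<longlongrightarrow> H) at_top"
  shows "(y \<longlongrightarrow> H / a) at_top"
proof (rule tendstoI)
  fix e :: real assume e: "e > 0"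
  have u: "eventually (\<lambda>t. y t < H / a + e) at_top"
    by (rule ode_upper[OF a e d lim])
  have d': "((\<lambda>t. - y t) has_real_derivative ((- h t) - a * (- y t))) (at t)" if "t > 0" for t
    using DERIV_minus[OF d[OF that]] by (simp add: algebra_simps)
  have l: "eventually (\<lambda>t. - y t < (- H) / a + e) at_top"
    by (rule ode_upper[OF a e d'], auto intro: tendsto_minus lim)
  from u l show "eventually (\<lambda>t. dist (y t) (H / a) < e) at_top"
    by eventually_elim (auto simp: dist_real_def abs_less_iff)
qed


lemma finite_nodes[simp]: "finite (nodes n)" by (simp add: nodes_def)

lemma rate_sum:
  assumes R: "finite R"
  shows "(\<Sum>B\<in>R. event_rate n le ls l A B) =
     (if {} \<in> R then le else 0)
   + (\<Sum>j\<in>nodes n. if insert j A \<in> R then ls j else 0)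
   + (\<Sum>i\<in>nodes n. \<Sum>j\<in>nodes n - {i}.
        if (if i \<in> A then insert j A else A) \<in> R then l i j else 0)"
proof -
  have 1: "(\<Sum>B\<in>R. if B = {} then le else 0) = (if {} \<in> R then le else 0)"
    using R by simp
  have 2: "(\<Sum>B\<in>R. \<Sum>j\<in>nodes n. if B = insert j A then ls j else 0)
      = (\<Sum>j\<in>nodes n. if insert j A \<in> R then ls j else 0)"
    by (subst sum.swap) (simp add: R)
  have 3: "(\<Sum>B\<in>R. \<Sum>i\<in>nodes n. \<Sum>j\<in>nodes n - {i}.
        if B = (if i \<in> A then insert j A else A) then l i j else 0)
     = (\<Sum>i\<in>nodes n. \<Sum>j\<in>nodes n - {i}.
        if (if i \<in> A then insert j A else A) \<in> R then l i j else 0)"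
    apply (subst sum.swap)
    apply (rule sum.cong[OF refl])
    apply (subst sum.swap)
    apply (simp add: R)
    done
  show ?thesis unfolding event_rate_def sum.distrib 1 2 3 ..
qed



lemma mass_rate:
  assumes A: "A \<subseteq> nodes n"
  shows "(\<Sum>B\<in>Pow (nodes n). event_rate n le ls l A B) = total_rate n le ls l"
proof -
  have "(\<Sum>j\<in>nodes n. if insert j A \<in> Pow (nodes n) then ls j else 0) = (\<Sum>j\<in>nodes n. ls j)"
    using A by (intro sum.cong) auto
  moreover have "(\<Sum>i\<in>nodes n. \<Sum>j\<in>nodes n - {i}.
        if (if i \<in> A then insert j A else A) \<in> Pow (nodes n) then l i j else 0)
      = (\<Sum>i\<in>nodes n. \<Sum>j\<in>nodes n - {i}. l i j)"
    using A by (intro sum.cong) auto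
  ultimately show ?thesis unfolding rate_sum[OF finite_Pow_iff[THEN iffD2, OF finite_nodes]] total_rate_def
    by simp
qed

definition Qs :: "nat \<Rightarrow> nat set \<Rightarrow> nat set set" where
  "Qs n S = {A\<in>Pow (nodes n). A \<inter> S \<noteq> {}}"

definition aS :: "nat \<Rightarrow> real \<Rightarrow> (nat \<Rightarrow> real) \<Rightarrow> (nat \<Rightarrow> nat \<Rightarrow> real) \<Rightarrow> nat set \<Rightarrow> real" where
  "aS n le ls l S = le + lam_s ls S + (\<Sum>i\<in>nodes n - S. lam_i l i S)"

lemma drift:
  assumes A: "A \<subseteq> nodes n" and S: "S \<subseteq> nodes n"
  shows "(\<Sum>B\<in>Qs n S. event_rate n le ls l A B) - total_rate n le ls l * (if A \<inter> S \<noteq> {} then 1 else 0)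
    = lam_s ls S - aS n le ls l S * (if A \<inter> S \<noteq> {} then 1 else 0)
      + (\<Sum>i\<in>nodes n - S. lam_i l i S * (if A \<inter> (S \<union> {i}) \<noteq> {} then 1 else 0))"
proof -
  have fQ: "finite (Qs n S)" unfolding Qs_def by simp
  have e0: "{} \<notin> Qs n S" unfolding Qs_def by simp
  have e1: "(\<Sum>j\<in>nodes n. if insert j A \<in> Qs n S then ls j else 0)
     = (\<Sum>j\<in>nodes n. if insert j A \<inter> S \<noteq> {} then ls j else 0)"
    using A by (intro sum.cong) (auto simp: Qs_def)
  have e2: "(\<Sum>i\<in>nodes n. \<Sum>j\<in>nodes n - {i}.
        if (if i \<in> A then insert j A else A) \<in> Qs n S then l i j else 0)
     = (\<Sum>i\<in>nodes n. \<Sum>j\<in>nodes n - {i}.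
        if (if i \<in> A then insert j A else A) \<inter> S \<noteq> {} then l i j else 0)"
    using A by (intro sum.cong) (auto simp: Qs_def)
  have RS: "(\<Sum>B\<in>Qs n S. event_rate n le ls l A B) =
     (\<Sum>j\<in>nodes n. if insert j A \<inter> S \<noteq> {} then ls j else 0)
   + (\<Sum>i\<in>nodes n. \<Sum>j\<in>nodes n - {i}.
        if (if i \<in> A then insert j A else A) \<inter> S \<noteq> {} then l i j else 0)"
    unfolding rate_sum[OF fQ] e1 e2 using e0 by simp
  show ?thesis
  proof (cases "A \<inter> S \<noteq> {}")
    case True
    have a: "(\<Sum>j\<in>nodes n. if insert j A \<inter> S \<noteq> {} then ls j else 0) = (\<Sum>j\<in>nodes n. ls j)"
      using True by (intro sum.cong) auto
    have b: "(\<Sum>i\<in>nodes n. \<Sum>j\<in>nodes n - {i}.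
        if (if i \<in> A then insert j A else A) \<inter> S \<noteq> {} then l i j else 0)
       = (\<Sum>i\<in>nodes n. \<Sum>j\<in>nodes n - {i}. l i j)"
      using True by (intro sum.cong) auto
    have c: "(\<Sum>i\<in>nodes n - S. lam_i l i S * (if A \<inter> (S \<union> {i}) \<noteq> {} then 1 else 0))
       = (\<Sum>i\<in>nodes n - S. lam_i l i S)"
      using True by (intro sum.cong) auto
    show ?thesis unfolding RS a b c using True by (simp add: total_rate_def aS_def)
  next
    case False
    have a: "(\<Sum>j\<in>nodes n. if insert j A \<inter> S \<noteq> {} then ls j else 0) = lam_s ls S"
    proof -
      have "(\<Sum>j\<in>nodes n. if insert j A \<inter> S \<noteq> {} then ls j else 0)
          = (\<Sum>j\<in>nodes n. if j \<in> S then ls j else 0)"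
        using False by (intro sum.cong) auto
      also have "\<dots> = (\<Sum>j\<in>nodes n \<inter> S. ls j)" by (simp add: sum.inter_restrict)
      also have "nodes n \<inter> S = S" using S by auto
      finally show ?thesis by (simp add: lam_s_def)
    qed
    have b: "(\<Sum>i\<in>nodes n. \<Sum>j\<in>nodes n - {i}.
        if (if i \<in> A then insert j A else A) \<inter> S \<noteq> {} then l i j else 0)
       = (\<Sum>i\<in>nodes n - S. lam_i l i S * (if A \<inter> (S \<union> {i}) \<noteq> {} then 1 else 0))"
    proof -
      have "(\<Sum>i\<in>nodes n. \<Sum>j\<in>nodes n - {i}.
        if (if i \<in> A then insert j A else A) \<inter> S \<noteq> {} then l i j else 0)
        = (\<Sum>i\<in>nodes n. if i \<in> A then lam_i l i S else 0)"
      proof (rule sum.cong[OF refl])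
        fix i assume i: "i \<in> nodes n"
        show "(\<Sum>j\<in>nodes n - {i}.
          if (if i \<in> A then insert j A else A) \<inter> S \<noteq> {} then l i j else 0)
          = (if i \<in> A then lam_i l i S else 0)"
        proof (cases "i \<in> A")
          case True
          hence iS: "i \<notin> S" using False by auto
          have "(\<Sum>j\<in>nodes n - {i}. if (if i \<in> A then insert j A else A) \<inter> S \<noteq> {} then l i j else 0)
             = (\<Sum>j\<in>nodes n - {i}. if j \<in> S then l i j else 0)"
            using True False by (intro sum.cong) auto
          also have "\<dots> = (\<Sum>j\<in>(nodes n - {i}) \<inter> S. l i j)" by (simp add: sum.inter_restrict)
          also have "(nodes n - {i}) \<inter> S = S" using S iS by auto
          finally show ?thesis using True by (simp add: lam_i_def)
        next
          case False2: False
          show ?thesis using False False2 by simp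
        qed
      qed
      also have "\<dots> = (\<Sum>i\<in>nodes n - S. if i \<in> A then lam_i l i S else 0)"
        using False A by (intro sum.mono_neutral_cong_right) auto
      also have "\<dots> = (\<Sum>i\<in>nodes n - S. lam_i l i S * (if A \<inter> (S \<union> {i}) \<noteq> {} then 1 else 0))"
        using False by (intro sum.cong) auto
      finally show ?thesis .
    qed
    show ?thesis unfolding RS a b using False by simp
  qed
qed



lemma deriv_B:
  assumes fwd: "forward_eq n le ls l p" and B: "B \<subseteq> nodes n" and t: "t \<ge> 0"
  shows "((\<lambda>u. p u B) has_real_derivative
           ((\<Sum>A\<in>Pow (nodes n). p t A * event_rate n le ls l A B)
            - p t B * total_rate n le ls l)) (at t within {0..})"
  using fwd B t unfolding forward_eq_def by auto

lemma mass_one: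
  assumes fwd: "forward_eq n le ls l p" and init: "initial_distribution n (p 0)" and t: "t \<ge> 0"
  shows "(\<Sum>A\<in>Pow (nodes n). p t A) = 1"
proof -
  have "\<exists>c. \<forall>x\<in>{0::real..}. (\<Sum>A\<in>Pow (nodes n). p x A) = c"
  proof (rule has_field_derivative_zero_constant)
    fix x :: real assume x: "x \<in> {0..}"
    have D: "((\<lambda>u. \<Sum>A\<in>Pow (nodes n). p u A) has_real_derivative
       (\<Sum>B\<in>Pow (nodes n). (\<Sum>A\<in>Pow (nodes n). p x A * event_rate n le ls l A B)
            - p x B * total_rate n le ls l)) (at x within {0..})"
      by (rule DERIV_sum) (use deriv_B[OF fwd] x in auto)
    have "(\<Sum>B\<in>Pow (nodes n). (\<Sum>A\<in>Pow (nodes n). p x A * event_rate n le ls l A B)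
            - p x B * total_rate n le ls l)
        = (\<Sum>A\<in>Pow (nodes n). p x A * (\<Sum>B\<in>Pow (nodes n). event_rate n le ls l A B))
          - (\<Sum>B\<in>Pow (nodes n). p x B * total_rate n le ls l)"
      by (simp add: sum_subtractf sum_distrib_left) (rule sum.swap)
    also have "\<dots> = 0"
      by (simp add: mass_rate)
    finally show "((\<lambda>u. \<Sum>A\<in>Pow (nodes n). p u A) has_field_derivative 0) (at x within {0..})"
      using D by simp
  qed auto
  then obtain c where c: "\<And>x. x \<ge> 0 \<Longrightarrow> (\<Sum>A\<in>Pow (nodes n). p x A) = c" by auto
  have "(\<Sum>A\<in>Pow (nodes n). p 0 A) = 1" using init unfolding initial_distribution_def by auto
  thus ?thesis using c[of 0] c[OF t] by simp
qed



lemma ind_sum: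
  "(\<Sum>A\<in>Pow (nodes n). p t A * (if A \<inter> X \<noteq> {} then 1 else 0)) = exp_fresh n p X t"
proof -
  have "(\<Sum>A\<in>Pow (nodes n). p t A * (if A \<inter> X \<noteq> {} then 1 else 0))
     = (\<Sum>A\<in>Pow (nodes n). if A \<inter> X \<noteq> {} then p t A else 0)" by (intro sum.cong) auto
  also have "\<dots> = sum (p t) {A\<in>Pow (nodes n). A \<inter> X \<noteq> {}}"
    by (rule sum.inter_filter[symmetric]) simp
  finally show ?thesis unfolding exp_fresh_def .
qed

lemma deriv_g:
  assumes fwd: "forward_eq n le ls l p" and init: "initial_distribution n (p 0)"
    and S: "S \<subseteq> nodes n" and t: "t > 0"
  shows "(exp_fresh n p S has_real_derivative
     ((lam_s ls S + (\<Sum>i\<in>nodes n - S. lam_i l i S * exp_fresh n p (S \<union> {i}) t))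
       - aS n le ls l S * exp_fresh n p S t)) (at t)"
proof -
  let ?P = "Pow (nodes n)"
  let ?er = "event_rate n le ls l" and ?tot = "total_rate n le ls l"
  have eq: "exp_fresh n p S = (\<lambda>u. \<Sum>B\<in>Qs n S. p u B)"
    unfolding exp_fresh_def Qs_def by auto
  have fQ: "finite (Qs n S)" unfolding Qs_def by simp
  have D: "(exp_fresh n p S has_real_derivative
       (\<Sum>B\<in>Qs n S. (\<Sum>A\<in>?P. p t A * ?er A B) - p t B * ?tot)) (at t within {0..})"
    unfolding eq by (rule DERIV_sum) (use deriv_B[OF fwd] t in \<open>auto simp: Qs_def\<close>)
  have "(\<Sum>B\<in>Qs n S. (\<Sum>A\<in>?P. p t A * ?er A B) - p t B * ?tot)
      = (\<Sum>A\<in>?P. p t A * (\<Sum>B\<in>Qs n S. ?er A B)) - (\<Sum>B\<in>Qs n S. p t B * ?tot)"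
    by (simp add: sum_subtractf sum_distrib_left) (rule sum.swap)
  also have "(\<Sum>B\<in>Qs n S. p t B * ?tot) = (\<Sum>A\<in>?P. p t A * (?tot * (if A \<inter> S \<noteq> {} then 1 else 0)))"
  proof -
    have "(\<Sum>B\<in>Qs n S. p t B * ?tot) = (\<Sum>A\<in>?P. if A \<inter> S \<noteq> {} then p t A * ?tot else 0)"
      unfolding Qs_def by (rule sum.inter_filter) simp
    also have "\<dots> = (\<Sum>A\<in>?P. p t A * (?tot * (if A \<inter> S \<noteq> {} then 1 else 0)))"
      by (intro sum.cong) auto
    finally show ?thesis .
  qed
  also have "(\<Sum>A\<in>?P. p t A * (\<Sum>B\<in>Qs n S. ?er A B)) - \<dots>
      = (\<Sum>A\<in>?P. p t A * ((\<Sum>B\<in>Qs n S. ?er A B) - ?tot * (if A \<inter> S \<noteq> {} then 1 else 0)))"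
    by (simp add: sum_subtractf right_diff_distrib)
  also have "\<dots> = (\<Sum>A\<in>?P. p t A * (lam_s ls S - aS n le ls l S * (if A \<inter> S \<noteq> {} then 1 else 0)
      + (\<Sum>i\<in>nodes n - S. lam_i l i S * (if A \<inter> (S \<union> {i}) \<noteq> {} then 1 else 0))))"
    using drift[OF _ S] by (intro sum.cong) auto
  also have "\<dots> = lam_s ls S * (\<Sum>A\<in>?P. p t A)
       - aS n le ls l S * (\<Sum>A\<in>?P. p t A * (if A \<inter> S \<noteq> {} then 1 else 0))
       + (\<Sum>i\<in>nodes n - S. lam_i l i S * (\<Sum>A\<in>?P. p t A * (if A \<inter> (S \<union> {i}) \<noteq> {} then 1 else 0)))"
  proof -
    have "(\<Sum>A\<in>?P. p t A * (lam_s ls S - aS n le ls l S * (if A \<inter> S \<noteq> {} then 1 else 0)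
      + (\<Sum>i\<in>nodes n - S. lam_i l i S * (if A \<inter> (S \<union> {i}) \<noteq> {} then 1 else 0))))
      = (\<Sum>A\<in>?P. lam_s ls S * p t A - aS n le ls l S * (p t A * (if A \<inter> S \<noteq> {} then 1 else 0))
      + (\<Sum>i\<in>nodes n - S. lam_i l i S * (p t A * (if A \<inter> (S \<union> {i}) \<noteq> {} then 1 else 0))))"
      by (intro sum.cong refl) (simp add: sum_distrib_left ring_distribs mult.left_commute mult.commute)
    also have "\<dots> = lam_s ls S * (\<Sum>A\<in>?P. p t A)
       - aS n le ls l S * (\<Sum>A\<in>?P. p t A * (if A \<inter> S \<noteq> {} then 1 else 0))
       + (\<Sum>A\<in>?P. \<Sum>i\<in>nodes n - S. lam_i l i S * (p t A * (if A \<inter> (S \<union> {i}) \<noteq> {} then 1 else 0)))"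
      by (simp only: sum.distrib sum_subtractf sum_distrib_left)
    also have "(\<Sum>A\<in>?P. \<Sum>i\<in>nodes n - S. lam_i l i S * (p t A * (if A \<inter> (S \<union> {i}) \<noteq> {} then 1 else 0)))
      = (\<Sum>i\<in>nodes n - S. lam_i l i S * (\<Sum>A\<in>?P. p t A * (if A \<inter> (S \<union> {i}) \<noteq> {} then 1 else 0)))"
      by (subst sum.swap) (simp only: sum_distrib_left)
    finally show ?thesis .
  qed
  also have "\<dots> = (lam_s ls S + (\<Sum>i\<in>nodes n - S. lam_i l i S * exp_fresh n p (S \<union> {i}) t))
       - aS n le ls l S * exp_fresh n p S t"
    unfolding ind_sum mass_one[OF fwd init less_imp_le[OF t]] by simp
  finally have D2: "(exp_fresh n p S has_real_derivative
     ((lam_s ls S + (\<Sum>i\<in>nodes n - S. lam_i l i S * exp_fresh n p (S \<union> {i}) t))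
       - aS n le ls l S * exp_fresh n p S t)) (at t within {0..})" using D by simp
  have "(exp_fresh n p S has_real_derivative
     ((lam_s ls S + (\<Sum>i\<in>nodes n - S. lam_i l i S * exp_fresh n p (S \<union> {i}) t))
       - aS n le ls l S * exp_fresh n p S t)) (at t within {0<..})"
    by (rule DERIV_subset[OF D2]) auto
  thus ?thesis using at_within_open[of t "{0<..}"] t by simp
qed



lemma step:
  assumes le_pos: "le > 0"
    and ls_nonneg: "\<forall>j\<in>nodes n. ls j \<ge> 0"
    and l_nonneg: "\<forall>i\<in>nodes n. \<forall>j\<in>nodes n. i \<noteq> j \<longrightarrow> l i j \<ge> 0"
    and init: "initial_distribution n (p 0)"
    and fwd: "forward_eq n le ls l p"
    and S: "S \<subseteq> nodes n"
    and IH: "\<And>i. i \<in> nodes n - S \<Longrightarrow> (exp_fresh n p (S \<union> {i}) \<longlongrightarrow> L i) at_top"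
  shows "(exp_fresh n p S \<longlongrightarrow> (lam_s ls S + (\<Sum>i\<in>nodes n - S. lam_i l i S * L i)) / aS n le ls l S) at_top"
proof (rule ode_limit)
  have lnn: "l i j \<ge> 0" if "i \<in> nodes n - S" "j \<in> S" for i j
  proof -
    have "j \<in> nodes n" "i \<in> nodes n" "i \<noteq> j" using S that by auto
    thus ?thesis using l_nonneg by simp
  qed
  have "lam_s ls S \<ge> 0" unfolding lam_s_def using ls_nonneg S by (intro sum_nonneg) auto
  moreover have "(\<Sum>i\<in>nodes n - S. lam_i l i S) \<ge> 0"
    unfolding lam_i_def using lnn by (intro sum_nonneg) auto
  ultimately show "aS n le ls l S > 0" unfolding aS_def using le_pos by linarith
  show "\<And>t. t > 0 \<Longrightarrow> (exp_fresh n p S has_real_derivative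
     ((lam_s ls S + (\<Sum>i\<in>nodes n - S. lam_i l i S * exp_fresh n p (S \<union> {i}) t))
       - aS n le ls l S * exp_fresh n p S t)) (at t)"
    by (rule deriv_g[OF fwd init S])
  show "((\<lambda>t. lam_s ls S + (\<Sum>i\<in>nodes n - S. lam_i l i S * exp_fresh n p (S \<union> {i}) t))
      \<longlongrightarrow> lam_s ls S + (\<Sum>i\<in>nodes n - S. lam_i l i S * L i)) at_top"
    by (intro tendsto_intros IH)
qed

theorem theorem1:
  fixes n :: nat and le :: real and ls :: "nat \<Rightarrow> real" and l :: "nat \<Rightarrow> nat \<Rightarrow> real"
    and p :: "real \<Rightarrow> nat set \<Rightarrow> real"
  assumes le_pos: "le > 0"
    and ls_nonneg: "\<forall>j\<in>nodes n. ls j \<ge> 0"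
    and l_nonneg: "\<forall>i\<in>nodes n. \<forall>j\<in>nodes n. i \<noteq> j \<longrightarrow> l i j \<ge> 0"
    and init: "initial_distribution n (p 0)"
    and fwd: "forward_eq n le ls l p"
  shows "\<exists>F :: nat set \<Rightarrow> real.
           (\<forall>S. S \<noteq> {} \<and> S \<subseteq> nodes n \<longrightarrow> (exp_fresh n p S \<longlongrightarrow> F S) at_top)
         \<and> (\<forall>S. S \<noteq> {} \<and> S \<subseteq> nodes n \<longrightarrow>
              F S = (lam_s ls S + (\<Sum>i\<in>upd_neighbors n l S. lam_i l i S * F (S \<union> {i})))
                    / (le + lam_s ls S + (\<Sum>i\<in>upd_neighbors n l S. lam_i l i S)))"
proof -
  note stp = step[OF le_pos ls_nonneg l_nonneg init fwd]
  have conv: "\<forall>S. S \<subseteq> nodes n \<and> card (nodes n - S) = k \<longrightarrow> (\<exists>L. (exp_fresh n p S \<longlongrightarrow> L) at_top)" for k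
  proof (induction k rule: less_induct)
    case (less k)
    show ?case
    proof (intro allI impI)
      fix S assume S: "S \<subseteq> nodes n \<and> card (nodes n - S) = k"
      have "\<exists>L. (exp_fresh n p (S \<union> {i}) \<longlongrightarrow> L) at_top" if i: "i \<in> nodes n - S" for i
      proof -
        have "card (nodes n - (S \<union> {i})) < card (nodes n - S)"
          using i by (intro psubset_card_mono) auto
        hence lt: "card (nodes n - (S \<union> {i})) < k" using S by simp
        have sub: "S \<union> {i} \<subseteq> nodes n" using S i by auto
        have "\<forall>S'. S' \<subseteq> nodes n \<and> card (nodes n - S') = card (nodes n - (S \<union> {i})) \<longrightarrow> (\<exists>L. (exp_fresh n p S' \<longlongrightarrow> L) at_top)"
          by (rule less.IH[OF lt])
        thus ?thesis using sub by blast
      qed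
      hence "\<forall>i\<in>nodes n - S. \<exists>L. (exp_fresh n p (S \<union> {i}) \<longlongrightarrow> L) at_top" by blast
      from bchoice[OF this] obtain L where L: "\<forall>i\<in>nodes n - S. (exp_fresh n p (S \<union> {i}) \<longlongrightarrow> L i) at_top"
        by (elim exE)
      have SS: "S \<subseteq> nodes n" using S by blast
      have "(exp_fresh n p S \<longlongrightarrow> (lam_s ls S + (\<Sum>i\<in>nodes n - S. lam_i l i S * L i)) / aS n le ls l S) at_top"
        by (rule stp[OF SS, of L]) (use L in blast)
      thus "\<exists>L. (exp_fresh n p S \<longlongrightarrow> L) at_top" by blast
    qed
  qed
  define F where "F S = Lim at_top (exp_fresh n p S)" for S
  have FT: "(exp_fresh n p S \<longlongrightarrow> F S) at_top" if "S \<subseteq> nodes n" for S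
  proof -
    have "S \<subseteq> nodes n \<and> card (nodes n - S) = card (nodes n - S)" using that by simp
    from conv[of "card (nodes n - S)", rule_format, OF this]
    obtain L where L: "(exp_fresh n p S \<longlongrightarrow> L) at_top" by (elim exE)
    have "F S = L" unfolding F_def by (rule tendsto_Lim[OF trivial_limit_at_top_linorder L])
    with L show ?thesis by simp
  qed
  show ?thesis
  proof (intro exI[where x=F] conjI allI impI)
    fix S assume "S \<noteq> {} \<and> S \<subseteq> nodes n"
    thus "(exp_fresh n p S \<longlongrightarrow> F S) at_top" using FT by auto
  next
    fix S assume S: "S \<noteq> {} \<and> S \<subseteq> nodes n"
    have SS: "S \<subseteq> nodes n" using S by blast
    have T1: "(exp_fresh n p S \<longlongrightarrow> (lam_s ls S + (\<Sum>i\<in>nodes n - S. lam_i l i S * F (S \<union> {i}))) / aS n le ls l S) at_top"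
    proof (rule stp[OF SS])
      fix i assume "i \<in> nodes n - S"
      hence "S \<union> {i} \<subseteq> nodes n" using SS by auto
      thus "(exp_fresh n p (S \<union> {i}) \<longlongrightarrow> F (S \<union> {i})) at_top" by (rule FT)
    qed
    have FS: "F S = (lam_s ls S + (\<Sum>i\<in>nodes n - S. lam_i l i S * F (S \<union> {i}))) / aS n le ls l S"
      by (rule tendsto_unique[OF trivial_limit_at_top_linorder FT[OF SS] T1])
    have nn: "lam_i l i S = 0" if "i \<in> nodes n - S - upd_neighbors n l S" for i
    proof -
      have "l i j \<ge> 0" if "j \<in> S" for j
      proof -
        have "j \<in> nodes n" "i \<in> nodes n" "i \<noteq> j"
          using S that \<open>i \<in> nodes n - S - upd_neighbors n l S\<close> by auto
        thus ?thesis using l_nonneg by simp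
      qed
      hence "lam_i l i S \<ge> 0" unfolding lam_i_def by (intro sum_nonneg) auto
      thus ?thesis using that unfolding upd_neighbors_def by auto
    qed
    have sub: "upd_neighbors n l S \<subseteq> nodes n - S" unfolding upd_neighbors_def by auto
    have e1: "(\<Sum>i\<in>nodes n - S. lam_i l i S * F (S \<union> {i})) = (\<Sum>i\<in>upd_neighbors n l S. lam_i l i S * F (S \<union> {i}))"
      using nn sub by (intro sum.mono_neutral_right) auto
    have e2: "(\<Sum>i\<in>nodes n - S. lam_i l i S) = (\<Sum>i\<in>upd_neighbors n l S. lam_i l i S)"
      using nn sub by (intro sum.mono_neutral_right) auto
    show "F S = (lam_s ls S + (\<Sum>i\<in>upd_neighbors n l S. lam_i l i S * F (S \<union> {i})))
                    / (le + lam_s ls S + (\<Sum>i\<in>upd_neighbors n l S. lam_i l i S))"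
      using FS unfolding e1 aS_def e2 by simp
  qed
qed


end
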